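(* Let $\mathcal X$ be the ternary coalescent started from $\mathbf r=(r_1,\dots,r_N)$, $N=2n+1$, with total mass $M=\sum r_i$, and let $(\mathcal X'_k)_{0\le k\le n}$ be its skeleton chain. Let $0\le l\le n$ and let $\pi$ be a partition of $\{1,\dots,N\}$ into $N-2l$ non-empty blocks $B_1,\dots,B_{N-2l}$, each of odd cardinality. Let $\Lambda'_\pi(N-2l)$ be the event that the $N-2l$ particles of $\mathcal X'_l$ result from the coagulation of the initial particles $\{r_i:i\in B_j\}$, $j=1,\dots,N-2l$. Then, with $\mathbf r_{B_j}=\sum_{i\in B_j}r_i$, $$\mathbb P(\Lambda'_\pi(N-2l))=\frac{l!}{\alpha(1)\cdots\alpha(l)}\prod_{j=1}^{N-2l}\frac{\Gamma\big((\mathbf r_{B_j}+|B_j|+2)/2\big)\,(|B_j|-1)!}{\Gamma\big((\mathbf r_{B_j}+3)/2\big)\,((|B_j|-1)/2)!},$$ where $\alpha(k)=\frac12(M+N+2-2k)(N+1-2k)(N-2k)$ and $\Gamma$ is the Gamma function.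
   Context: $\mathcal S^\downarrow$ is the set of nonincreasing sequences $s_1\ge s_2\ge\dots\ge0$ with finitely many nonzero terms, identified with their nonzero entries (particles). The ternary coalescent is the continuous-time Markov jump process on $\mathcal S^\downarrow$ in which each triple of distinct particles with masses $a,b,c$ merges into one particle of mass $a+b+c$ at rate $a+b+c+3$ (independently over triples, i.e. jump rates $\sum_{i<j<k}(s_i+s_j+s_k+3)\delta_{\mathbf s^{i\oplus j\oplus k}}$, where $\mathbf s^{i\oplus j\oplus k}$ merges entries $i,j,k$ and reranks). Particles are tracked by the set of initial particles (labels in $\{1,\dots,N\}$) they are made of. With $T_0=0$ and $T_k$ the $k$-th coagulation time, the skeleton chain is $\mathcal X'_k=\mathcal X(T_k)$. *)

theory Defs
  imports "HOL-Analysis.Analysis" "HOL-Library.Disjoint_Sets"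
begin

text \<open>Ternary coalescent with labelled particles. A state is a partition of the
label set {1..N}; a block B is a particle of mass  sum r over B.\<close>

definition blockmass :: "(nat \<Rightarrow> real) \<Rightarrow> nat set \<Rightarrow> real" where
  "blockmass r B = (\<Sum>i\<in>B. r i)"

definition triples :: "nat set set \<Rightarrow> nat set set set" where
  "triples P = {T. T \<subseteq> P \<and> card T = 3}"

definition trate :: "(nat \<Rightarrow> real) \<Rightarrow> nat set set \<Rightarrow> real" where
  "trate r T = (\<Sum>B\<in>T. blockmass r B) + 3"

definition merge :: "nat set set \<Rightarrow> nat set set \<Rightarrow> nat set set" where
  "merge P T = (P - T) \<union> {\<Union>T}"

definition skel_trans :: "(nat \<Rightarrow> real) \<Rightarrow> nat set set \<Rightarrow> nat set set \<Rightarrow> real" where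
  "skel_trans r P Q =
     (\<Sum>T\<in>triples P. if merge P T = Q
        then trate r T / (\<Sum>T'\<in>triples P. trate r T') else 0)"

definition singletons :: "nat \<Rightarrow> nat set set" where
  "singletons N = {{i} | i. i \<in> {1..N}}"

text \<open>skel_prob r N k Q = P(X'_k = Q), the law of the skeleton chain started from
the partition into singletons of {1..N}.\<close>
primrec skel_prob :: "(nat \<Rightarrow> real) \<Rightarrow> nat \<Rightarrow> nat \<Rightarrow> nat set set \<Rightarrow> real" where
  "skel_prob r N 0 Q = (if Q = singletons N then 1 else 0)"
| "skel_prob r N (Suc k) Q =
     (\<Sum>P\<in>{P. partition_on {1..N} P}. skel_prob r N k P * skel_trans r P Q)"

definition alpha :: "real \<Rightarrow> nat \<Rightarrow> nat \<Rightarrow> real" where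
  "alpha M N k = (M + real N + 2 - 2 * real k) * (real N + 1 - 2 * real k) * (real N - 2 * real k) / 2"

end

theory Submission
  imports Defs
begin

lemma partition_finite: "partition_on {1..(N::nat)} P \<Longrightarrow> finite P"
  by (metis finite_UnionD finite_atLeastAtMost partition_onD1)

lemma finite_Parts0: "finite A \<Longrightarrow> finite {P. partition_on A P}"
proof (rule finite_subset[of _ "Pow (Pow A)"])
  show "{P. partition_on A P} \<subseteq> Pow (Pow A)"
    by (auto simp: partition_on_def)
qed auto

lemma finite_Parts: "finite {P. partition_on {m..(N::nat)} P}"
  by (rule finite_Parts0) auto

lemma finite_triples: "finite P \<Longrightarrow> finite (triples P)"
  unfolding triples_def by (rule finite_subset[of _ "Pow P"]) auto

lemma merge_part:
  assumes "partition_on A P" "T \<subseteq> P" "T \<noteq> {}"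
  shows "partition_on A (merge P T)"
proof -
  have U: "A = \<Union>P" "disjoint P" "{} \<notin> P" using assms(1) by (auto simp: partition_on_def)
  show ?thesis unfolding partition_on_def merge_def
  proof (intro conjI)
    show "\<Union>((P - T) \<union> {\<Union> T}) = A" using U assms(2) by auto
    have "\<Union>T \<noteq> {}"
    proof -
      obtain t where t: "t \<in> T" using assms(3) by blast
      then have "t \<noteq> {}" using U(3) assms(2) by blast
      then show ?thesis using t by blast
    qed
    then show "{} \<notin> P - T \<union> {\<Union> T}" using U(3) by blast
    show "disjoint (P - T \<union> {\<Union> T})"
      unfolding disjoint_def using U(2) assms(2)
      unfolding disjoint_def by (auto simp: disjoint_iff) (metis subsetD)+
  qed
qed

fun spg :: "(nat \<Rightarrow> real) \<Rightarrow> nat \<Rightarrow> nat set set \<Rightarrow> nat \<Rightarrow> nat set set \<Rightarrow> real" where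
  "spg r N P0 0 Q = (if Q = P0 then 1 else 0)"
| "spg r N P0 (Suc k) Q = (\<Sum>P\<in>{P. partition_on {1..N} P}. spg r N P0 k P * skel_trans r P Q)"

lemma ifm: "(if c then a else 0) * (x::real) = (if c then a * x else 0)"
  "(x::real) * (if c then a else 0) = (if c then x * a else 0)"
  by auto

lemma skel_spg: "skel_prob r N k Q = spg r N (singletons N) k Q"
  by (induction k arbitrary: Q) auto

lemma trans_nz:
  assumes "skel_trans r P Q \<noteq> 0" shows "\<exists>T\<in>triples P. merge P T = Q"
proof (rule ccontr)
  assume "\<not> ?thesis"
  then have "skel_trans r P Q = 0" unfolding skel_trans_def by (intro sum.neutral) auto
  with assms show False by simp
qed

lemma triples_ne: "T \<in> triples P \<Longrightarrow> T \<subseteq> P \<and> T \<noteq> {}"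
  unfolding triples_def by auto

lemma back_step:
  assumes "partition_on {1..N} P0"
  shows "spg r N P0 (Suc k) Q = (\<Sum>P'\<in>{P. partition_on {1..N} P}. skel_trans r P0 P' * spg r N P' k Q)"
proof (induction k arbitrary: Q)
  case 0
  have "spg r N P0 (Suc 0) Q = skel_trans r P0 Q"
    using assms by (simp add: finite_Parts ifm)
  also have "\<dots> = (\<Sum>P'\<in>{P. partition_on {1..N} P}. skel_trans r P0 P' * spg r N P' 0 Q)"
  proof (cases "partition_on {1..N} Q")
    case True then show ?thesis by (simp add: finite_Parts ifm)
  next
    case False
    have "skel_trans r P0 Q = 0"
    proof (rule ccontr)
      assume "skel_trans r P0 Q \<noteq> 0"
      then obtain T where "T \<in> triples P0" "merge P0 T = Q" using trans_nz by blast
      then show False using merge_part[OF assms] triples_ne False by blast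
    qed
    then show ?thesis using False by (simp add: finite_Parts ifm)
  qed
  finally show ?case .
next
  case (Suc k)
  have "spg r N P0 (Suc (Suc k)) Q = (\<Sum>P\<in>{P. partition_on {1..N} P}.
     (\<Sum>P'\<in>{P. partition_on {1..N} P}. skel_trans r P0 P' * spg r N P' k P) * skel_trans r P Q)"
    using Suc by simp
  also have "\<dots> = (\<Sum>P'\<in>{P. partition_on {1..N} P}. skel_trans r P0 P' *
     (\<Sum>P\<in>{P. partition_on {1..N} P}. spg r N P' k P * skel_trans r P Q))"
    by (simp add: sum_distrib_left sum_distrib_right mult.assoc) (rule sum.swap)
  also have "\<dots> = (\<Sum>P'\<in>{P. partition_on {1..N} P}. skel_trans r P0 P' * spg r N P' (Suc k) Q)"
    by simp
  finally show ?case .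
qed

lemma zero:
  assumes "spg r N P k Q \<noteq> 0" shows "\<forall>A\<in>P. \<exists>B\<in>Q. A \<subseteq> B"
  using assms
proof (induction k arbitrary: Q)
  case 0 then show ?case by (auto split: if_splits)
next
  case (Suc k)
  then obtain R where "spg r N P k R * skel_trans r R Q \<noteq> 0"
    by (auto elim: sum.not_neutral_contains_not_neutral)
  then have R: "spg r N P k R \<noteq> 0" "skel_trans r R Q \<noteq> 0" by auto
  from trans_nz[OF R(2)] obtain T where T: "T \<in> triples R" "merge R T = Q" by blast
  have "\<forall>A\<in>P. \<exists>B\<in>R. A \<subseteq> B" using Suc.IH R(1) by blast
  moreover have "\<forall>A\<in>R. \<exists>B\<in>Q. A \<subseteq> B" using T unfolding merge_def by auto
  ultimately show ?case by (meson order_trans)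
qed

definition Z :: "(nat \<Rightarrow> real) \<Rightarrow> nat set set \<Rightarrow> real" where
  "Z r P = (\<Sum>T'\<in>triples P. trate r T')"

lemma merge_sum:
  assumes "partition_on {1..N} P0"
  shows "(\<Sum>P'\<in>{P. partition_on {1..N} P}. skel_trans r P0 P' * g P') =
     (\<Sum>T\<in>triples P0. trate r T / Z r P0 * g (merge P0 T))"
proof -
  have fin: "finite (triples P0)" using finite_triples partition_finite assms by blast
  have "(\<Sum>P'\<in>{P. partition_on {1..N} P}. skel_trans r P0 P' * g P') =
     (\<Sum>T\<in>triples P0. \<Sum>P'\<in>{P. partition_on {1..N} P}.
        (if merge P0 T = P' then trate r T / Z r P0 else 0) * g P')"
    unfolding skel_trans_def Z_def sum_distrib_right
    by (rule sum.swap)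
  also have "\<dots> = (\<Sum>T\<in>triples P0. trate r T / Z r P0 * g (merge P0 T))"
  proof (rule sum.cong[OF refl])
    fix T assume "T \<in> triples P0"
    then have "partition_on {1..N} (merge P0 T)" using merge_part[OF assms] triples_ne by blast
    then show "(\<Sum>P'\<in>{P. partition_on {1..N} P}.
        (if merge P0 T = P' then trate r T / Z r P0 else 0) * g P') = trate r T / Z r P0 * g (merge P0 T)"
      by (simp add: finite_Parts ifm)
  qed
  finally show ?thesis .
qed

lemma choose3: "real (c choose 3) = real c * (real c - 1) * (real c - 2) / 6"
  by (simp add: binomial_gbinomial gbinomial_prod_rev numeral_3_eq_3 eval_nat_numeral)
lemma choose2: "real (c choose 2) = real c * (real c - 1) / 2"
  by (simp add: binomial_gbinomial gbinomial_prod_rev eval_nat_numeral)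

lemma card_triples_mem:
  assumes "finite S" "A \<in> S"
  shows "card {T \<in> triples S. A \<in> T} = (card S - 1) choose 2"
proof -
  have eq: "{T \<in> triples S. A \<in> T} = insert A ` {U. U \<subseteq> S - {A} \<and> card U = 2}"
  proof
    show "{T \<in> triples S. A \<in> T} \<subseteq> insert A ` {U. U \<subseteq> S - {A} \<and> card U = 2}"
    proof
      fix T assume T: "T \<in> {T \<in> triples S. A \<in> T}"
      then have "T = insert A (T - {A})" by auto
      moreover have "T - {A} \<subseteq> S - {A}" "card (T - {A}) = 2"
        using T unfolding triples_def by auto
      ultimately show "T \<in> insert A ` {U. U \<subseteq> S - {A} \<and> card U = 2}" by blast
    qed
  next
    show "insert A ` {U. U \<subseteq> S - {A} \<and> card U = 2} \<subseteq> {T \<in> triples S. A \<in> T}"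
    proof
      fix T assume "T \<in> insert A ` {U. U \<subseteq> S - {A} \<and> card U = 2}"
      then obtain U where U: "T = insert A U" "U \<subseteq> S - {A}" "card U = 2" by blast
      then have "finite U" using assms(1) finite_subset by blast
      moreover have "A \<notin> U" using U(2) by blast
      ultimately have "card T = 3" using U by (simp add: card_insert_disjoint)
      then show "T \<in> {T \<in> triples S. A \<in> T}" using U assms unfolding triples_def by auto
    qed
  qed
  have inj: "inj_on (insert A) {U. U \<subseteq> S - {A} \<and> card U = 2}"
    by (rule inj_onI) (metis Diff_insert_absorb Diff_iff insertI1 mem_Collect_eq subset_iff)
  have "card {T \<in> triples S. A \<in> T} = card {U. U \<subseteq> S - {A} \<and> card U = 2}"
    unfolding eq using inj by (rule card_image)
  also have "\<dots> = card (S - {A}) choose 2" using assms by (intro n_subsets) auto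
  finally show ?thesis using assms by auto
qed

lemma triple_sum:
  assumes "finite S"
  shows "(\<Sum>T\<in>triples S. trate r T) =
    real ((card S - 1) choose 2) * (\<Sum>A\<in>S. blockmass r A) + 3 * real (card S choose 3)"
proof -
  have fin: "finite (triples S)" using assms finite_triples by blast
  have "(\<Sum>T\<in>triples S. \<Sum>A\<in>T. blockmass r A) = (\<Sum>T\<in>triples S. \<Sum>A\<in>{A\<in>S. A \<in> T}. blockmass r A)"
    by (rule sum.cong[OF refl], rule sum.cong) (auto simp: triples_def)
  also have "\<dots> = (\<Sum>A\<in>S. \<Sum>T\<in>{T\<in>triples S. A \<in> T}. blockmass r A)"
    using sum.swap_restrict[OF fin assms, of "\<lambda>T A. blockmass r A" "\<lambda>T A. A \<in> T"] by simp
  also have "\<dots> = (\<Sum>A\<in>S. real ((card S - 1) choose 2) * blockmass r A)"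
    using card_triples_mem[OF assms] by simp
  finally have 1: "(\<Sum>T\<in>triples S. \<Sum>A\<in>T. blockmass r A) =
      real ((card S - 1) choose 2) * (\<Sum>A\<in>S. blockmass r A)"
    by (simp add: sum_distrib_left)
  have 2: "card (triples S) = card S choose 3"
    unfolding triples_def using n_subsets[OF assms] by simp
  show ?thesis unfolding trate_def sum.distrib using 1 2 by simp
qed

lemma triple_sum_closed:
  assumes "finite S" "card S \<ge> 1"
  shows "(\<Sum>T\<in>triples S. trate r T) =
    ((\<Sum>A\<in>S. blockmass r A) + real (card S)) * (real (card S) - 1) * (real (card S) - 2) / 2"
proof -
  have h: "real ((card S - 1) choose 2) = (real (card S) - 1) * (real (card S) - 2) / 2"
    using assms(2) by (simp add: choose2 of_nat_diff)
  show ?thesis unfolding triple_sum[OF assms(1)] choose3 h by (simp add: field_simps)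
qed

lemma alg:
  fixes G0 K i m g F :: real
  assumes "G0 > 0" "K > 0" "i \<ge> 0"
  shows "(m + (2*i+3)) * (2*i+3 - 1) * (2*i+3-2)/2 * (g*F/(G0*K)) =
     (i+1) * ((m+2*i+3)/2 * g * (((2*i+2)*(2*i+1))*F) / (G0*((i+1)*K)))"
proof -
  define X where "X = (m+2*i+3)/2 * g * (((2*i+2)*(2*i+1))*F)"
  have ne: "i + 1 \<noteq> 0" "G0 * K \<noteq> 0" using assms by auto
  have "(i+1) * (X / (G0*((i+1)*K))) = X / (G0 * K)"
    using ne by (simp add: divide_simps)
  also have "\<dots> = (m + (2*i+3)) * (2*i+3 - 1) * (2*i+3-2)/2 * (g*F/(G0*K))"
    unfolding X_def using ne by (simp add: divide_simps) (simp add: algebra_simps)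
  finally show ?thesis unfolding X_def by simp
qed

definition fB :: "real \<Rightarrow> nat \<Rightarrow> real" where
  "fB m c = Gamma ((m + real c + 2) / 2) * fact (c - 1) / (Gamma ((m + 3) / 2) * fact ((c - 1) div 2))"

lemma fB_step:
  assumes m: "m > 0" and c: "odd c"
  shows "(m + real c) * (real c - 1) * (real c - 2) / 2 * fB m (c - 2) = real ((c - 1) div 2) * fB m c"
proof (cases "c = 1")
  case True then show ?thesis by simp
next
  case False
  have "c = 2 * ((c - 3) div 2) + 3" using c False by presburger
  then obtain i where i: "c = 2 * i + 3" by blast
  define x where "x = (m + 2 * real i + 3) / 2"
  have x: "x > 0" using m by (simp add: x_def)
  have G: "Gamma ((m + real c + 2) / 2) = x * Gamma x"
  proof -
    have e: "(m + real c + 2) / 2 = x + 1" by (simp add: x_def i field_simps)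
    have "x \<notin> \<int>\<^sub>\<le>\<^sub>0" using x by (auto elim: nonpos_Ints_cases)
    then show ?thesis by (subst e, rule Gamma_plus1)
  qed
  have c2: "real (c - 2) = 2 * real i + 1" by (simp add: i)
  have "(m + real (c - 2) + 2) / 2 = x" unfolding c2 x_def by simp
  then have G2: "Gamma ((m + real (c - 2) + 2) / 2) = Gamma x" by simp
  have g0: "Gamma ((m + 3) / 2) > 0" using m by simp
  have f1: "fact (c - 1) = (real (2*i+2) * real (2*i+1)) * (fact (2 * i) :: real)"
    by (simp add: i fact_Suc_0 algebra_simps)
  have f2: "fact ((c - 1) div 2) = real (i+1) * (fact i :: real)"
    by (simp add: i)
  have f3: "c - 2 - 1 = 2 * i" "(c - 2 - 1) div 2 = i" "(c - 1) div 2 = i + 1" by (auto simp: i)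
  have K: "(fact i :: real) > 0" by simp
  define G0 where "G0 = Gamma ((m + 3) / 2)"
  define g where "g = Gamma x"
  define F where "F = (fact (2 * i) :: real)"
  define Ki where "Ki = (fact i :: real)"
  have L: "fB m (c - 2) = g * F / (G0 * Ki)"
    unfolding fB_def G2 f3 G0_def g_def F_def Ki_def by simp
  have R: "fB m c = x * g * ((real (2*i+2) * real (2*i+1)) * F) / (G0 * (real (i+1) * Ki))"
    unfolding fB_def G f1 f2 f3(3) G0_def g_def F_def Ki_def by simp
  have cr: "real c = 2 * real i + 3" by (simp add: i)
  have "G0 > 0" "Ki > 0" using g0 K by (auto simp: G0_def Ki_def)
  from alg[OF this, of "real i" m g F]
  show ?thesis unfolding L R cr f3(3) x_def by simp
qed



definition cnt :: "nat set set \<Rightarrow> nat set \<Rightarrow> nat" where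
  "cnt P B = card {A \<in> P. A \<subseteq> B}"

lemma bm_part:
  assumes "partition_on X S" "finite X"
  shows "(\<Sum>A\<in>S. blockmass r A) = (\<Sum>i\<in>X. r i)"
proof -
  have U: "X = \<Union>S" by (rule partition_onD1[OF assms(1)])
  have fU: "finite (\<Union>S)" using assms(2) unfolding U .
  have fA: "\<forall>A\<in>S. finite A" using fU by (meson Union_upper finite_subset)
  have d: "\<forall>A\<in>S. \<forall>B\<in>S. A \<noteq> B \<longrightarrow> A \<inter> B = {}"
    using disjointD[OF partition_onD2[OF assms(1)]] by blast
  show ?thesis unfolding U blockmass_def by (simp add: sum.Union_disjoint[OF fA d])
qed

lemma bm_pos:
  assumes "\<forall>i\<in>{1..N}. r i > 0" "B \<subseteq> {1..N}" "B \<noteq> {}"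
  shows "blockmass r B > 0"
proof -
  have "finite B" using assms(2) finite_subset by blast
  then show ?thesis unfolding blockmass_def using assms by (intro sum_pos) auto
qed

lemma UT_notin:
  assumes P: "disjoint P" "{} \<notin> P" and T: "T \<in> triples P"
  shows "\<Union>T \<notin> P - T"
proof
  assume A: "\<Union>T \<in> P - T"
  have "T \<noteq> {}" using T unfolding triples_def by auto
  then obtain t where t: "t \<in> T" by blast
  have tP: "t \<in> P" using t T unfolding triples_def by auto
  have "t \<noteq> \<Union>T" using t A by (metis DiffD2)
  then have "t \<inter> \<Union>T = {}" using disjointD[OF P(1) tP] A by blast
  moreover have "t \<subseteq> \<Union>T" using t by blast
  moreover have "t \<noteq> {}" using tP P(2) by blast
  ultimately show False by blast
qed

lemma card_merge:
  assumes P: "disjoint P" "{} \<notin> P" "finite P" and T: "T \<in> triples P"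
  shows "card (merge P T) = card P - 2"
proof -
  have TP: "T \<subseteq> P" "card T = 3" using T unfolding triples_def by auto
  have "card P \<ge> 3" using TP P(3) card_mono by metis
  have "card (merge P T) = card (P - T) + 1"
    unfolding merge_def using UT_notin[OF P(1,2) T] P(3) by simp
  also have "card (P - T) = card P - 3" using TP P(3) by (simp add: card_Diff_subset finite_subset)
  finally show ?thesis using \<open>card P \<ge> 3\<close> by simp
qed

context
  fixes N :: nat and P0 Q :: "nat set set"
  assumes P0: "partition_on {1..N} P0" and Q: "partition_on {1..N} Q"
    and ref: "\<forall>A\<in>P0. \<exists>B\<in>Q. A \<subseteq> B"
begin

lemma U0: "\<Union>P0 = {1..N}" "\<Union>Q = {1..N}"
  using partition_onD1[OF P0] partition_onD1[OF Q] by simp_all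

lemma finP0: "finite P0" using P0 partition_finite by blast
lemma finQ: "finite Q" using Q partition_finite by blast

lemma Q_unique: "X \<noteq> {} \<Longrightarrow> B1 \<in> Q \<Longrightarrow> B2 \<in> Q \<Longrightarrow> X \<subseteq> B1 \<Longrightarrow> X \<subseteq> B2 \<Longrightarrow> B1 = B2"
  using disjointD[OF partition_onD2[OF Q]] by blast

lemma P0_ne: "A \<in> P0 \<Longrightarrow> A \<noteq> {}" using partition_onD3[OF P0] by blast

lemma sub_part:
  assumes B: "B \<in> Q" shows "partition_on B {A \<in> P0. A \<subseteq> B}"
proof (rule partition_onI)
  show "\<Union>{A \<in> P0. A \<subseteq> B} = B"
  proof
    show "B \<subseteq> \<Union>{A \<in> P0. A \<subseteq> B}"
    proof
      fix x assume x: "x \<in> B"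
      then have "x \<in> \<Union>P0" unfolding U0(1) using B U0(2) by blast
      then obtain A where A: "A \<in> P0" "x \<in> A" by blast
      then obtain B' where B': "B' \<in> Q" "A \<subseteq> B'" using ref by blast
      have "B' = B" using Q_unique[of "{x}" B' B] B B' A x by auto
      then show "x \<in> \<Union>{A \<in> P0. A \<subseteq> B}" using A B' by blast
    qed
  qed blast
  show "\<And>p q. p \<in> {A \<in> P0. A \<subseteq> B} \<Longrightarrow> q \<in> {A \<in> P0. A \<subseteq> B} \<Longrightarrow> p \<noteq> q \<Longrightarrow> disjnt p q"
    using partition_onD2[OF P0] unfolding pairwise_def by blast
  show "{} \<notin> {A \<in> P0. A \<subseteq> B}" using P0_ne by blast
qed

lemma sub_finite: "finite {A \<in> P0. A \<subseteq> B}" using finP0 by simp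

lemma sum_cnt: "(\<Sum>B\<in>Q. cnt P0 B) = card P0"
proof -
  have "P0 = (\<Union>B\<in>Q. {A \<in> P0. A \<subseteq> B})" using ref by blast
  moreover have "card (\<Union>B\<in>Q. {A \<in> P0. A \<subseteq> B}) = (\<Sum>B\<in>Q. card {A \<in> P0. A \<subseteq> B})"
  proof (rule card_UN_disjoint[OF finQ])
    show "\<forall>i\<in>Q. finite {A \<in> P0. A \<subseteq> i}" using sub_finite by blast
    show "\<forall>i\<in>Q. \<forall>j\<in>Q. i \<noteq> j \<longrightarrow> {A \<in> P0. A \<subseteq> i} \<inter> {A \<in> P0. A \<subseteq> j} = {}"
    proof (intro ballI impI)
      fix i j assume "i \<in> Q" "j \<in> Q" "i \<noteq> j"
      then show "{A \<in> P0. A \<subseteq> i} \<inter> {A \<in> P0. A \<subseteq> j} = {}"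
        using Q_unique[OF P0_ne] by blast
    qed
  qed
  ultimately show ?thesis unfolding cnt_def by simp
qed

lemma cnt_pos: "B \<in> Q \<Longrightarrow> cnt P0 B \<ge> 1"
proof -
  assume B: "B \<in> Q"
  then have "B \<noteq> {}" using partition_onD3[OF Q] by blast
  moreover have "\<Union>{A \<in> P0. A \<subseteq> B} = B" using partition_onD1[OF sub_part[OF B]] by simp
  ultimately have "{A \<in> P0. A \<subseteq> B} \<noteq> {}" by auto
  then show ?thesis unfolding cnt_def using sub_finite by (simp add: Suc_le_eq card_gt_0_iff)
qed

lemma bm_sub: "B \<in> Q \<Longrightarrow> (\<Sum>A\<in>{A \<in> P0. A \<subseteq> B}. blockmass r A) = blockmass r B"
proof -
  assume B: "B \<in> Q"
  have "B \<subseteq> {1..N}" using B U0(2) by blast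
  then have "finite B" using finite_subset by blast
  then show ?thesis using bm_part[OF sub_part[OF B]] unfolding blockmass_def by simp
qed

lemma merge_props:
  assumes T: "T \<in> triples P0" and B: "B \<in> Q" and TB: "T \<subseteq> {A \<in> P0. A \<subseteq> B}"
  shows "partition_on {1..N} (merge P0 T)"
    and "\<forall>A\<in>merge P0 T. \<exists>B\<in>Q. A \<subseteq> B"
    and "cnt (merge P0 T) B = cnt P0 B - 2"
    and "\<And>B'. B' \<in> Q \<Longrightarrow> B' \<noteq> B \<Longrightarrow> cnt (merge P0 T) B' = cnt P0 B'"
    and "card (merge P0 T) = card P0 - 2"
proof -
  have TP: "T \<subseteq> P0" "card T = 3" "T \<noteq> {}" using T unfolding triples_def by auto
  have dP: "disjoint P0" "{} \<notin> P0" using P0 partition_on_def by auto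
  show "partition_on {1..N} (merge P0 T)" using merge_part[OF P0 TP(1,3)] .
  show "\<forall>A\<in>merge P0 T. \<exists>B\<in>Q. A \<subseteq> B" using ref TB B unfolding merge_def by auto
  show "card (merge P0 T) = card P0 - 2" using card_merge[OF dP finP0 T] .
  have UTB: "\<Union>T \<subseteq> B" using TB by blast
  have UTne: "\<Union>T \<noteq> {}"
  proof -
    obtain t where t: "t \<in> T" using TP(3) by blast
    then have "t \<noteq> {}" using dP(2) TP(1) by blast
    then show ?thesis using t by blast
  qed
  have nin: "\<Union>T \<notin> P0 - T" using UT_notin[OF dP T] .
  have e1: "{A \<in> merge P0 T. A \<subseteq> B} = ({A \<in> P0. A \<subseteq> B} - T) \<union> {\<Union>T}"
    using UTB unfolding merge_def by auto
  have fT: "finite T" using TP(2) by (metis card.infinite zero_neq_numeral)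
  have "card {A \<in> merge P0 T. A \<subseteq> B} = card ({A \<in> P0. A \<subseteq> B} - T) + 1"
    unfolding e1 using nin sub_finite by simp
  also have "card ({A \<in> P0. A \<subseteq> B} - T) = card {A \<in> P0. A \<subseteq> B} - 3"
    using TB TP(2) by (simp add: card_Diff_subset fT)
  moreover have "card {A \<in> P0. A \<subseteq> B} \<ge> 3" using TB TP(2) sub_finite card_mono by metis
  ultimately show "cnt (merge P0 T) B = cnt P0 B - 2" unfolding cnt_def by simp
  fix B' assume B': "B' \<in> Q" "B' \<noteq> B"
  have "{A \<in> merge P0 T. A \<subseteq> B'} = {A \<in> P0. A \<subseteq> B'}"
  proof
    show "{A \<in> merge P0 T. A \<subseteq> B'} \<subseteq> {A \<in> P0. A \<subseteq> B'}"
      using Q_unique[OF UTne B B'(1) UTB] B'(2) unfolding merge_def by auto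
    show "{A \<in> P0. A \<subseteq> B'} \<subseteq> {A \<in> merge P0 T. A \<subseteq> B'}"
    proof
      fix A assume A: "A \<in> {A \<in> P0. A \<subseteq> B'}"
      have "A \<notin> T"
      proof
        assume "A \<in> T"
        then have "A \<subseteq> B" using TB by blast
        then show False using Q_unique[OF P0_ne B B'(1)] A B'(2) by blast
      qed
      then show "A \<in> {A \<in> merge P0 T. A \<subseteq> B'}" using A unfolding merge_def by auto
    qed
  qed
  then show "cnt (merge P0 T) B' = cnt P0 B'" unfolding cnt_def by simp
qed

end


lemma rearr: "(a::real) / z * (f / p * (g * R)) = f / (z * p) * ((a * g) * R)"
  by (simp add: mult_ac)
lemma rearr2: "fact l / (X::real) * real (Suc l) * Pr = fact (Suc l) / X * Pr"
  by (simp add: fact_Suc mult_ac)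

lemma sum_half:
  assumes fin: "finite Q" and odd: "\<forall>B\<in>Q. odd (c B)" and s: "(\<Sum>B\<in>Q. c B) = card Q + 2 * l"
  shows "(\<Sum>B\<in>Q. (c B - 1) div 2) = (l::nat)"
proof -
  have "(\<Sum>B\<in>Q. c B) = (\<Sum>B\<in>Q. 2 * ((c B - 1) div 2) + 1)"
    using odd by (intro sum.cong) (auto elim!: oddE)
  also have "\<dots> = (\<Sum>B\<in>Q. 2 * ((c B - 1) div 2)) + (\<Sum>B\<in>Q. 1)"
    by (rule sum.distrib)
  also have "\<dots> = 2 * (\<Sum>B\<in>Q. (c B - 1) div 2) + card Q"
    by (simp add: sum_distrib_left)
  finally show ?thesis using s by simp
qed

lemma alpha_shift: "c \<ge> 2 \<Longrightarrow> alpha M c (Suc k) = alpha M (c - 2) k"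
  unfolding alpha_def by (simp add: of_nat_diff algebra_simps)

lemma main:
  fixes r :: "nat \<Rightarrow> real" and N :: nat
  assumes pos: "\<forall>i\<in>{1..N}. r i > 0"
  shows "partition_on {1..N} P0 \<Longrightarrow> partition_on {1..N} Q \<Longrightarrow> (\<forall>A\<in>P0. \<exists>B\<in>Q. A \<subseteq> B) \<Longrightarrow>
    (\<forall>B\<in>Q. odd (cnt P0 B)) \<Longrightarrow> card P0 = card Q + 2 * l \<Longrightarrow>
    spg r N P0 l Q = fact l / (\<Prod>k=1..l. alpha (\<Sum>i=1..N. r i) (card P0) k) *
      (\<Prod>B\<in>Q. fB (blockmass r B) (cnt P0 B))"
proof (induction l arbitrary: P0)
  case 0
  note p0 = "0.prems"(1) and q = "0.prems"(2) and rf = "0.prems"(3) and od = "0.prems"(4)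
    and cd = "0.prems"(5)
  have Qsub: "\<And>B. B \<in> Q \<Longrightarrow> B \<subseteq> {1..N}" using U0(2)[OF p0 q rf] by blast
  have all1: "\<forall>B\<in>Q. cnt P0 B = 1"
  proof (rule ccontr)
    assume "\<not> ?thesis"
    then obtain B0 where B0: "B0 \<in> Q" "cnt P0 B0 \<noteq> 1" by blast
    have "(\<Sum>B\<in>Q. 1) < (\<Sum>B\<in>Q. cnt P0 B)"
    proof (rule sum_strict_mono_ex1[OF finQ[OF p0 q rf]])
      show "\<forall>x\<in>Q. 1 \<le> cnt P0 x" using cnt_pos[OF p0 q rf] by blast
      show "\<exists>a\<in>Q. 1 < cnt P0 a" using B0 cnt_pos[OF p0 q rf B0(1)] by force
    qed
    then show False using sum_cnt[OF p0 q rf] cd by simp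
  qed
  have QP: "Q \<subseteq> P0"
  proof
    fix B assume B: "B \<in> Q"
    then have "card {A \<in> P0. A \<subseteq> B} = 1" using all1 unfolding cnt_def by blast
    then obtain A where A: "{A \<in> P0. A \<subseteq> B} = {A}" by (rule card_1_singletonE)
    have "\<Union>{A \<in> P0. A \<subseteq> B} = B" using partition_onD1[OF sub_part[OF p0 q rf B]] by simp
    then have "A = B" using A by simp
    then show "B \<in> P0" using A by blast
  qed
  have QeP: "Q = P0" using card_subset_eq[OF finP0[OF p0 q rf] QP] cd by simp
  have "(\<Prod>B\<in>Q. fB (blockmass r B) (cnt P0 B)) = 1"
  proof (rule prod.neutral, rule ballI)
    fix B assume B: "B \<in> Q"
    have "B \<noteq> {}" using B partition_onD3[OF q] by blast
    then have "blockmass r B > 0" using bm_pos[OF pos Qsub[OF B]] by blast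
    then have "Gamma ((blockmass r B + 3) / 2) > 0" by simp
    then show "fB (blockmass r B) (cnt P0 B) = 1" using all1 B unfolding fB_def by (simp add: ac_simps)
  qed
  then show ?case using QeP by simp
next
  case (Suc l)
  note p0 = "Suc.prems"(1) and q = "Suc.prems"(2) and rf = "Suc.prems"(3) and od = "Suc.prems"(4)
    and cd = "Suc.prems"(5)
  define M where "M = (\<Sum>i=1..N. r i)"
  define sub where "sub B = {A \<in> P0. A \<subseteq> B}" for B
  have Qsub: "\<And>B. B \<in> Q \<Longrightarrow> B \<subseteq> {1..N}" using U0(2)[OF p0 q rf] by blast
  have c0: "card P0 \<ge> 2" using cd by simp
  have c1: "card P0 \<ge> 1" using cd by simp
  have Zeq: "Z r P0 = alpha M (card P0) 1"
    unfolding Z_def triple_sum_closed[OF finP0[OF p0 q rf] c1] bm_part[OF p0 finite_atLeastAtMost]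
      alpha_def M_def by simp
  have prodeq: "(\<Prod>k=1..Suc l. alpha M (card P0) k) = alpha M (card P0) 1 * (\<Prod>k=1..l. alpha M (card P0 - 2) k)"
  proof -
    have "(\<Prod>k=1..Suc l. alpha M (card P0) k) = alpha M (card P0) 1 * (\<Prod>k=Suc 1..Suc l. alpha M (card P0) k)"
      by (rule prod.atLeast_Suc_atMost) simp
    also have "(\<Prod>k=Suc 1..Suc l. alpha M (card P0) k) = (\<Prod>k=1..l. alpha M (card P0) (Suc k))"
      by (rule prod.shift_bounds_cl_Suc_ivl)
    also have "\<dots> = (\<Prod>k=1..l. alpha M (card P0 - 2) k)"
      using alpha_shift[OF c0] by simp
    finally show ?thesis .
  qed
  define P' where "P' = (\<Prod>k=1..l. alpha M (card P0 - 2) k)"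
  define H where "H B = fact l / P' * (fB (blockmass r B) (cnt P0 B - 2) *
      (\<Prod>B'\<in>Q - {B}. fB (blockmass r B') (cnt P0 B')))" for B
  have key: "spg r N (merge P0 T) l Q = (\<Sum>B\<in>Q. if T \<subseteq> sub B then H B else 0)"
    if T: "T \<in> triples P0" for T
  proof (cases "\<exists>B\<in>Q. T \<subseteq> sub B")
    case True
    then obtain B where B: "B \<in> Q" "T \<subseteq> sub B" by blast
    have TP: "T \<subseteq> P0" "T \<noteq> {}" using T unfolding triples_def by auto
    obtain t where t: "t \<in> T" using TP(2) by blast
    have tne: "t \<noteq> {}" using P0_ne[OF p0 q rf] t TP(1) by blast
    have uniq: "T \<subseteq> sub B' \<longleftrightarrow> B' = B" if "B' \<in> Q" for B'
    proof
      assume "T \<subseteq> sub B'"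
      then have "t \<subseteq> B'" "t \<subseteq> B" using t B(2) unfolding sub_def by auto
      then show "B' = B" using Q_unique[OF p0 q rf tne that B(1)] by blast
    qed (use B in blast)
    have "(\<Sum>B'\<in>Q. if T \<subseteq> sub B' then H B' else 0) = (\<Sum>B'\<in>Q. if B' = B then H B' else 0)"
      using uniq by (intro sum.cong) auto
    also have "\<dots> = H B" using B(1) finQ[OF p0 q rf] by simp
    finally have S: "(\<Sum>B'\<in>Q. if T \<subseteq> sub B' then H B' else 0) = H B" .
    note mp = merge_props[OF p0 q rf T B(1) B(2)[unfolded sub_def]]
    have cB: "cnt P0 B \<ge> 3"
    proof -
      have "card T = 3" using T unfolding triples_def by auto
      moreover have "card T \<le> card (sub B)"
        unfolding sub_def by (rule card_mono[OF sub_finite[OF p0 q rf] B(2)[unfolded sub_def]])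
      ultimately show ?thesis unfolding cnt_def sub_def by simp
    qed
    have odm: "\<forall>B'\<in>Q. odd (cnt (merge P0 T) B')"
    proof
      fix B' assume B': "B' \<in> Q"
      show "odd (cnt (merge P0 T) B')"
      proof (cases "B' = B")
        case True
        have "odd (cnt P0 B)" using od B(1) by blast
        then show ?thesis using True mp(3) cB by (auto elim!: oddE)
      next
        case False then show ?thesis using mp(4)[OF B'] od B' by simp
      qed
    qed
    have cdm: "card (merge P0 T) = card Q + 2 * l" using mp(5) cd by simp
    have IH: "spg r N (merge P0 T) l Q = fact l / (\<Prod>k=1..l. alpha M (card (merge P0 T)) k) *
      (\<Prod>B\<in>Q. fB (blockmass r B) (cnt (merge P0 T) B))"
      using Suc.IH[OF mp(1) q mp(2) odm cdm] unfolding M_def .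
    have "(\<Prod>B'\<in>Q. fB (blockmass r B') (cnt (merge P0 T) B')) =
        fB (blockmass r B) (cnt (merge P0 T) B) * (\<Prod>B'\<in>Q - {B}. fB (blockmass r B') (cnt (merge P0 T) B'))"
      using prod.remove[OF finQ[OF p0 q rf] B(1)] .
    also have "(\<Prod>B'\<in>Q - {B}. fB (blockmass r B') (cnt (merge P0 T) B')) =
        (\<Prod>B'\<in>Q - {B}. fB (blockmass r B') (cnt P0 B'))"
      using mp(4) by (intro prod.cong) auto
    finally have "(\<Prod>B'\<in>Q. fB (blockmass r B') (cnt (merge P0 T) B')) =
        fB (blockmass r B) (cnt P0 B - 2) * (\<Prod>B'\<in>Q - {B}. fB (blockmass r B') (cnt P0 B'))"
      unfolding mp(3) .
    then have "spg r N (merge P0 T) l Q = H B" unfolding IH H_def P'_def mp(5) by simp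
    then show ?thesis using S by simp
  next
    case False
    have "spg r N (merge P0 T) l Q = 0"
    proof (rule ccontr)
      assume "spg r N (merge P0 T) l Q \<noteq> 0"
      have "\<Union>T \<in> merge P0 T" unfolding merge_def by simp
      with zero[OF \<open>spg r N (merge P0 T) l Q \<noteq> 0\<close>] have "\<exists>B\<in>Q. \<Union>T \<subseteq> B" by (rule bspec)
      then obtain B where B: "B \<in> Q" "\<Union>T \<subseteq> B" by (rule bexE)
      have TP0: "T \<subseteq> P0" using T unfolding triples_def by auto
      have "T \<subseteq> sub B" unfolding sub_def using TP0 B(2) by auto
      then have "\<exists>B\<in>Q. T \<subseteq> sub B" using B(1) by (intro bexI)
      with False show False by contradiction
    qed
    moreover have "(\<Sum>B\<in>Q. if T \<subseteq> sub B then H B else 0) = 0"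
      using False by (intro sum.neutral) auto
    ultimately show ?thesis by simp
  qed
  have finT: "finite (triples P0)" using finite_triples finP0[OF p0 q rf] by blast
  have blockB: "(\<Sum>T\<in>triples P0. if T \<subseteq> sub B then trate r T / Z r P0 * H B else 0) =
      real (Suc l) * 0 + fact l / (Z r P0 * P') * (real ((cnt P0 B - 1) div 2) *
        (\<Prod>B'\<in>Q. fB (blockmass r B') (cnt P0 B')))" if B: "B \<in> Q" for B
  proof -
    have e1: "{T \<in> triples P0. T \<subseteq> sub B} = triples (sub B)"
      unfolding triples_def sub_def by auto
    have "(\<Sum>T\<in>triples P0. if T \<subseteq> sub B then trate r T / Z r P0 * H B else 0) =
        (\<Sum>T\<in>triples (sub B). trate r T / Z r P0 * H B)"
      unfolding e1[symmetric] by (rule sum.inter_filter[OF finT, symmetric])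
    also have "\<dots> = (\<Sum>T\<in>triples (sub B). trate r T) / Z r P0 * H B"
      by (simp add: sum_divide_distrib sum_distrib_right)
    also have "(\<Sum>T\<in>triples (sub B). trate r T) =
        (blockmass r B + real (cnt P0 B)) * (real (cnt P0 B) - 1) * (real (cnt P0 B) - 2) / 2"
      using triple_sum_closed[OF sub_finite[OF p0 q rf], of B r] cnt_pos[OF p0 q rf B] bm_sub[OF p0 q rf B]
      unfolding sub_def cnt_def by simp
    also have "\<dots> / Z r P0 * H B = fact l / (Z r P0 * P') *
        (((blockmass r B + real (cnt P0 B)) * (real (cnt P0 B) - 1) * (real (cnt P0 B) - 2) / 2 *
          fB (blockmass r B) (cnt P0 B - 2)) * (\<Prod>B'\<in>Q - {B}. fB (blockmass r B') (cnt P0 B')))"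
      unfolding H_def by (rule rearr)
    also have "(blockmass r B + real (cnt P0 B)) * (real (cnt P0 B) - 1) * (real (cnt P0 B) - 2) / 2 *
          fB (blockmass r B) (cnt P0 B - 2) = real ((cnt P0 B - 1) div 2) * fB (blockmass r B) (cnt P0 B)"
    proof (rule fB_step)
      have "B \<noteq> {}" using B partition_onD3[OF q] by blast
      then show "blockmass r B > 0" using bm_pos[OF pos Qsub[OF B]] by blast
      show "odd (cnt P0 B)" using od B by blast
    qed
    also have "real ((cnt P0 B - 1) div 2) * fB (blockmass r B) (cnt P0 B) *
        (\<Prod>B'\<in>Q - {B}. fB (blockmass r B') (cnt P0 B')) =
        real ((cnt P0 B - 1) div 2) * (\<Prod>B'\<in>Q. fB (blockmass r B') (cnt P0 B'))"
      by (subst prod.remove[OF finQ[OF p0 q rf] B]) (simp add: mult.assoc)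
    finally show ?thesis by simp
  qed
  have half: "(\<Sum>B\<in>Q. real ((cnt P0 B - 1) div 2)) = real (Suc l)"
    using sum_half[OF finQ[OF p0 q rf] od, of "Suc l"] sum_cnt[OF p0 q rf] cd
    by (simp flip: of_nat_sum)
  have "spg r N P0 (Suc l) Q = (\<Sum>P'\<in>{P. partition_on {1..N} P}. skel_trans r P0 P' * spg r N P' l Q)"
    by (rule back_step[OF p0])
  also have "\<dots> = (\<Sum>T\<in>triples P0. trate r T / Z r P0 * spg r N (merge P0 T) l Q)"
    by (rule merge_sum[OF p0])
  also have "\<dots> = (\<Sum>T\<in>triples P0. \<Sum>B\<in>Q. if T \<subseteq> sub B then trate r T / Z r P0 * H B else 0)"
  proof (rule sum.cong[OF refl])
    fix T assume "T \<in> triples P0"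
    then show "trate r T / Z r P0 * spg r N (merge P0 T) l Q =
      (\<Sum>B\<in>Q. if T \<subseteq> sub B then trate r T / Z r P0 * H B else 0)"
      unfolding key[OF \<open>T \<in> triples P0\<close>] sum_distrib_left ifm(2) by simp
  qed
  also have "\<dots> = (\<Sum>B\<in>Q. \<Sum>T\<in>triples P0. if T \<subseteq> sub B then trate r T / Z r P0 * H B else 0)"
    by (rule sum.swap)
  also have "\<dots> = (\<Sum>B\<in>Q. fact l / (Z r P0 * P') * (real ((cnt P0 B - 1) div 2) *
        (\<Prod>B'\<in>Q. fB (blockmass r B') (cnt P0 B'))))"
    using blockB by (intro sum.cong) auto
  also have "\<dots> = fact l / (Z r P0 * P') * (\<Sum>B\<in>Q. real ((cnt P0 B - 1) div 2)) *
        (\<Prod>B'\<in>Q. fB (blockmass r B') (cnt P0 B'))"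
    by (simp add: sum_distrib_left sum_distrib_right mult.assoc)
  also have "\<dots> = fact (Suc l) / (Z r P0 * P') * (\<Prod>B'\<in>Q. fB (blockmass r B') (cnt P0 B'))"
    unfolding half by (rule rearr2)
  also have "Z r P0 * P' = (\<Prod>k=1..Suc l. alpha M (card P0) k)"
    unfolding prodeq Zeq P'_def ..
  finally show ?case unfolding M_def .
qed


lemma singletons_eq: "singletons N = (\<lambda>i. {i}) ` {1..N}"
  unfolding singletons_def by auto

theorem proposition2p3:
  fixes n l :: nat and r :: "nat \<Rightarrow> real" and \<pi> :: "nat set set"
  assumes pos: "\<forall>i\<in>{1..2*n+1}. r i > 0"
    and l: "l \<le> n"
    and part: "partition_on {1..2*n+1} \<pi>"
    and cardpi: "card \<pi> = 2*n+1 - 2*l"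
    and odd: "\<forall>B\<in>\<pi>. odd (card B)"
  shows "skel_prob r (2*n+1) l \<pi> =
    fact l / (\<Prod>k=1..l. alpha (\<Sum>i=1..2*n+1. r i) (2*n+1) k) *
    (\<Prod>B\<in>\<pi>. Gamma ((blockmass r B + real (card B) + 2) / 2) * fact (card B - 1)
        / (Gamma ((blockmass r B + 3) / 2) * fact ((card B - 1) div 2)))"
proof -
  define N where "N = 2*n+1"
  define S where "S = singletons N"
  have Seq: "S = (\<lambda>i. {i}) ` {1..N}" unfolding S_def by (rule singletons_eq)
  have pS: "partition_on {1..N} S" unfolding Seq by (rule partition_on_singletons)
  have pp: "partition_on {1..N} \<pi>" using part unfolding N_def .
  have U: "\<Union>\<pi> = {1..N}" using partition_onD1[OF pp] by simp
  have rf: "\<forall>A\<in>S. \<exists>B\<in>\<pi>. A \<subseteq> B" unfolding Seq using U by auto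
  have cntc: "cnt S B = card B" if B: "B \<in> \<pi>" for B
  proof -
    have "B \<subseteq> {1..N}" using B U by blast
    then have "{A \<in> S. A \<subseteq> B} = (\<lambda>i. {i}) ` B" unfolding Seq by auto
    moreover have "inj_on (\<lambda>i. {i}) B" by (auto intro: inj_onI)
    ultimately show ?thesis unfolding cnt_def by (simp add: card_image)
  qed
  have od: "\<forall>B\<in>\<pi>. odd (cnt S B)" using odd cntc by simp
  have cS: "card S = N" unfolding Seq by (simp add: card_image)
  have cd: "card S = card \<pi> + 2 * l" using cS cardpi l unfolding N_def by simp
  have "skel_prob r N l \<pi> = spg r N S l \<pi>" unfolding S_def by (rule skel_spg)
  also have "\<dots> = fact l / (\<Prod>k=1..l. alpha (\<Sum>i=1..N. r i) (card S) k) *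
      (\<Prod>B\<in>\<pi>. fB (blockmass r B) (cnt S B))"
    using main[OF pos[folded N_def] pS pp rf od cd] .
  also have "(\<Prod>B\<in>\<pi>. fB (blockmass r B) (cnt S B)) = (\<Prod>B\<in>\<pi>. fB (blockmass r B) (card B))"
    using cntc by (intro prod.cong) auto
  finally show ?thesis unfolding cS N_def fB_def .
qed

end
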